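(* Let $A\in\mathbb{R}^{n\times d}$ be a random data matrix whose rows are i.i.d. with mean zero and covariance $\Sigma$ (and satisfy Assumption 1 as in the context), split row-wise into $m$ blocks $A^{(i)}\in\mathbb{R}^{(n/m)\times d}$. Let $\lambda>0$, $H=\frac1nA^TA+\lambda I$, $d_\lambda=\mathrm{tr}(\Sigma(\Sigma+\lambda I)^{-1})$ with $md_\lambda<n$, and $\tilde H=\left(\frac1m\sum_{i=1}^m\left(\frac{1}{1-\frac{md_\lambda}{n}}\frac mnA^{(i)T}A^{(i)}+\lambda I\right)^{-1}\right)^{-1}$. For a vector $g_t$, let $p_t^\star=H^{-1}g_t$ be the true Newton step and $\tilde p_t$ the output of $s_t$ iterations of preconditioned conjugate gradient for $Hp=g_t$ with preconditioner $\tilde H^{-1}$ and initial point $0$. Then \[\frac{\|\tilde p_t-p_t^\star\|_H^2}{\|p_t^\star\|_H^2}\le4\left(\frac{1-\sqrt{1-\frac{\alpha}{1-\alpha}}}{1+\sqrt{1-\frac{\alpha}{1-\alpha}}}\right)^{s_t},\] where $\alpha=(\sigma_{\max}+\lambda+\alpha_0)\left(\frac1{\lambda^2}\alpha_0+\alpha_1+\|\Omega_0\|\right)$, $\alpha_0=\|\Sigma-\frac1nA^TA\|$, $\alpha_1=\|\tilde H^{-1}-\mathbb{E}[\tilde H^{-1}]\|$, $\Omega_0=\mathbb{E}[\tilde H^{-1}]-(\Sigma+\lambda I)^{-1}$, and $\sigma_{\max}$ is the largest eigenvalue of $\Sigma$.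
   Context: $\|v\|_H=\sqrt{v^THv}$; $\|\cdot\|$ is the spectral norm. Assumption 1 (for rows $x$ of the data, in the regime $n,d\to\infty$, $d/n\to y\in[0,1)$): the empirical spectral distribution of the covariance converges a.s. for a.e. $u\ge0$; $\sup_{\|e\|=1}\mathbb{E}(e^Tx)^4<\infty$ and $\sup_{\|\Omega\|=1}\mathrm{Var}(x^T\Omega x/d)\to0$; eigenvalues of the covariance lie in $[\sigma_{\min},\sigma_{\max}]$ with $\sigma_{\min}>0$ and $\sigma_{\max}$ independent of $n$.
   Formalization: The bound is taken under the extra hypothesis alpha <= 1/2, and Assumption 1 enters without its asymptotic clauses (convergence of the empirical spectral distribution, $\sup_{\|\Omega\|=1}\mathrm{Var}(x^T\Omega x/d)\to0$, $\sigma_{\max}$ independent of n). Apart from conventions, each condition added here is assumed in the paper as well or is needed for the statement above to hold. *)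

theory Defs
  imports "HOL-Analysis.Analysis" "HOL-Probability.Probability"
begin

definition spec_norm :: "real^'n^'m \<Rightarrow> real" where
  "spec_norm M = onorm (\<lambda>x. M *v x)"

definition Hnorm :: "real^'n^'n \<Rightarrow> real^'n \<Rightarrow> real" where
  "Hnorm H v = sqrt (v \<bullet> (H *v v))"

definition lambda_max :: "real^'n^'n \<Rightarrow> real" where
  "lambda_max S = Max {\<mu>. \<exists>v. v \<noteq> 0 \<and> S *v v = \<mu> *\<^sub>R v}"

definition outer :: "real^'n \<Rightarrow> real^'n^'n" where
  "outer x = (\<chi> i j. x $ i * x $ j)"

(* Preconditioned conjugate gradient for  A x = b  with preconditioner P
   (z_k = P r_k), initial point x_0 = 0.  State: (x_k, r_k, p_k). *)
fun pcg_state :: "real^'n^'n \<Rightarrow> real^'n^'n \<Rightarrow> real^'n \<Rightarrow> nat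
                   \<Rightarrow> (real^'n) \<times> (real^'n) \<times> (real^'n)" where
  "pcg_state A P b 0 = (0, b, P *v b)"
| "pcg_state A P b (Suc k) =
     (case pcg_state A P b k of (x, r, p) \<Rightarrow>
        let z = P *v r;
            a = (r \<bullet> z) / (p \<bullet> (A *v p));
            x' = x + a *\<^sub>R p;
            r' = r - a *\<^sub>R (A *v p);
            z' = P *v r';
            \<beta> = (r' \<bullet> z') / (r \<bullet> z);
            p' = z' + \<beta> *\<^sub>R p
        in (x', r', p'))"

definition pcg :: "real^'n^'n \<Rightarrow> real^'n^'n \<Rightarrow> real^'n \<Rightarrow> nat \<Rightarrow> real^'n" where
  "pcg A P b s = fst (pcg_state A P b s)"

(* Data matrix A with n = m*k rows indexed by ('m \<times> 'k); block i = rows (i, _) *)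
definition block :: "real^'d^('m::finite \<times> 'k::finite) \<Rightarrow> 'm \<Rightarrow> real^'d^'k" where
  "block A i = (\<chi> j. A $ (i, j))"

definition Hmat :: "real \<Rightarrow> real^'d^('m::finite \<times> 'k::finite) \<Rightarrow> real^'d^'d" where
  "Hmat lam A = (1 / real CARD('m \<times> 'k)) *\<^sub>R (transpose A ** A) + lam *\<^sub>R mat 1"

definition d_eff :: "real \<Rightarrow> real^'d^'d \<Rightarrow> real" where
  "d_eff lam \<Sigma> = trace (\<Sigma> ** matrix_inv (\<Sigma> + lam *\<^sub>R mat 1))"

definition Htilde :: "real \<Rightarrow> real^'d^'d \<Rightarrow> real^'d^('m::finite \<times> 'k::finite) \<Rightarrow> real^'d^'d" where
  "Htilde lam \<Sigma> A =
     (let m = real CARD('m); n = real CARD('m \<times> 'k) in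
      matrix_inv ((1 / m) *\<^sub>R
        (\<Sum>i\<in>UNIV. matrix_inv
            ((1 / (1 - m * d_eff lam \<Sigma> / n)) *\<^sub>R ((m / n) *\<^sub>R (transpose (block A i) ** block A i))
             + lam *\<^sub>R mat 1))))"

end

theory Submission
  imports Defs
begin

lemma sym_inner:
  fixes M :: "real^'n^'n"
  assumes "transpose M = M"
  shows "x \<bullet> (M *v y) = (M *v x) \<bullet> y"
proof -
  have "x \<bullet> (M *v y) = (x v* M) \<bullet> y" by (simp add: dot_lmul_matrix)
  also have "x v* M = transpose M *v x" by simp
  finally show ?thesis using assms by simp
qed

lemma pd_inj:
  fixes M :: "real^'n^'n"
  assumes "c > 0" "\<And>x. c * (x \<bullet> x) \<le> x \<bullet> (M *v x)"
  shows "invertible M"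
proof -
  have "inj ((*v) M)"
  proof (rule injI)
    fix x y assume "M *v x = M *v y"
    hence "M *v (x - y) = 0" by (simp add: matrix_vector_mult_diff_distrib)
    hence "c * ((x-y) \<bullet> (x-y)) \<le> 0" using assms(2)[of "x-y"] by simp
    hence "(x-y) \<bullet> (x-y) \<le> 0" using assms(1) by (simp add: mult_le_0_iff)
    hence "x - y = 0" by (meson inner_gt_zero_iff not_le)
    thus "x = y" by simp
  qed
  thus ?thesis using matrix_left_invertible_injective invertible_left_inverse by blast
qed

lemma inv_props:
  fixes M :: "real^'n^'n"
  assumes "invertible M"
  shows "M ** matrix_inv M = mat 1" "matrix_inv M ** M = mat 1"
  using assms unfolding invertible_def matrix_inv_def by (metis (mono_tags, lifting) someI_ex)+

lemma inv_unique:
  fixes M B :: "real^'n^'n"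
  assumes "invertible M" "B ** M = mat 1"
  shows "matrix_inv M = B"
  by (metis assms inv_props(1) matrix_mul_assoc matrix_mul_lid matrix_mul_rid)

lemma inv_invertible:
  fixes M :: "real^'n^'n"
  assumes "invertible M"
  shows "invertible (matrix_inv M)" "matrix_inv (matrix_inv M) = M"
  using assms inv_props invertible_def inv_unique by metis+

lemma inv_sym:
  fixes M :: "real^'n^'n"
  assumes "invertible M" "transpose M = M"
  shows "transpose (matrix_inv M) = matrix_inv M"
proof -
  have "transpose (matrix_inv M) ** M = mat 1"
    using inv_props(1)[OF assms(1)] assms(2) by (metis matrix_transpose_mul transpose_mat)
  thus ?thesis using inv_unique[OF assms(1)] by metis
qed

lemma inv_apply:
  fixes M :: "real^'n^'n"
  assumes "invertible M"
  shows "M *v (matrix_inv M *v y) = y" "matrix_inv M *v (M *v y) = y"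
  using inv_props[OF assms] by (simp_all add: matrix_vector_mul_assoc)

lemma inv_pd:
  fixes M :: "real^'n^'n"
  assumes "c > 0" "\<And>x. c * (x \<bullet> x) \<le> x \<bullet> (M *v x)" "transpose M = M"
  shows "y \<noteq> 0 \<Longrightarrow> 0 < y \<bullet> (matrix_inv M *v y)"
    "norm (matrix_inv M *v y) \<le> norm y / c"
proof -
  have inv: "invertible M" using pd_inj assms by blast
  define u where "u = matrix_inv M *v y"
  have y: "y = M *v u" using inv_apply[OF inv] u_def by simp
  have e: "y \<bullet> (matrix_inv M *v y) = u \<bullet> (M *v u)" using y u_def by (simp add: inner_commute)
  show "y \<noteq> 0 \<Longrightarrow> 0 < y \<bullet> (matrix_inv M *v y)"
  proof -
    assume "y \<noteq> 0" hence "u \<noteq> 0" using y by auto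
    hence "0 < c * (u \<bullet> u)" using assms(1) by simp
    thus ?thesis using e assms(2)[of u] by linarith
  qed
  have "c * (norm u)^2 \<le> u \<bullet> y" using assms(2)[of u] y by (simp add: power2_norm_eq_inner)
  also have "\<dots> \<le> norm u * norm y" by (rule Cauchy_Schwarz_ineq2[THEN order_trans[OF abs_ge_self]])
  finally have "c * (norm u)^2 \<le> norm u * norm y" .
  hence "c * norm u \<le> norm y"
    by (cases "norm u = 0") (auto simp: power2_eq_square)
  thus "norm (matrix_inv M *v y) \<le> norm y / c" using assms(1) u_def by (simp add: field_simps)
qed

lemma psd_CS:
  fixes M :: "real^'n^'n"
  assumes sym: "transpose M = M" and psd: "\<And>x. 0 \<le> x \<bullet> (M *v x)"
  shows "(x \<bullet> (M *v y))^2 \<le> (x \<bullet> (M *v x)) * (y \<bullet> (M *v y))"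
proof -
  define a where "a = x \<bullet> (M *v x)"
  define b where "b = x \<bullet> (M *v y)"
  define c where "c = y \<bullet> (M *v y)"
  have yx: "y \<bullet> (M *v x) = b" unfolding b_def using sym_inner[OF sym, of y x] by (simp add: inner_commute)
  have q: "0 \<le> a + 2*t*b + t^2*c" for t
  proof -
    have "0 \<le> (x + t *\<^sub>R y) \<bullet> (M *v (x + t *\<^sub>R y))" by (rule psd)
    also have "\<dots> = a + 2*t*b + t^2*c"
      unfolding a_def b_def c_def using yx[unfolded b_def]
      by (simp add: algebra_simps inner_add_left inner_add_right power2_eq_square)
    finally show ?thesis .
  qed
  have c0: "0 \<le> c" using psd c_def by simp
  show ?thesis
  proof (cases "c = 0")
    case True
    show ?thesis
    proof (cases "b = 0")
      case False
      have "0 \<le> a + 2*(-(a+1)/(2*b))*b" using q[of "-(a+1)/(2*b)"] True by simp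
      also have "\<dots> = -1" using False by (simp add: field_simps)
      finally show ?thesis by simp
    qed (use psd[of x] psd[of y] in \<open>simp add: b_def\<close>)
  next
    case False
    hence cp: "c > 0" using c0 by simp
    have "0 \<le> a + 2*(-b/c)*b + (-b/c)^2*c" by (rule q)
    hence "0 \<le> c * (a + 2*(-b/c)*b + (-b/c)^2*c)" using c0 by simp
    also have "\<dots> = a*c + 2*((-b/c)*c)*b + ((-b/c)*c)^2"
      by (simp add: power2_eq_square algebra_simps)
    also have "(-b/c)*c = -b" using cp by simp
    finally have "b^2 \<le> a * c" by (simp add: power2_eq_square)
    thus ?thesis unfolding a_def b_def c_def .
  qed
qed

lemma psd_bound:
  fixes M :: "real^'n^'n"
  assumes sym: "transpose M = M" and psd: "\<And>x. 0 \<le> x \<bullet> (M *v x)"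
    and K: "\<And>y. y \<bullet> (M *v y) \<le> K * (y \<bullet> y)"
  shows "(norm (M *v u))^2 \<le> K * (u \<bullet> (M *v u))"
proof -
  define w where "w = M *v u"
  have "w \<bullet> w = u \<bullet> (M *v w)" unfolding w_def using sym_inner[OF sym, of u w] by (simp add: w_def)
  hence "(w \<bullet> w)^2 \<le> (u \<bullet> (M *v u)) * (w \<bullet> (M *v w))" using psd_CS[OF sym psd, of u w] by simp
  also have "\<dots> \<le> (u \<bullet> (M *v u)) * (K * (w \<bullet> w))"
    by (rule mult_left_mono[OF K psd])
  finally have *: "(w \<bullet> w) * (w \<bullet> w) \<le> (K * (u \<bullet> (M *v u))) * (w \<bullet> w)"
    by (simp add: power2_eq_square algebra_simps)
  have "w \<bullet> w \<le> K * (u \<bullet> (M *v u))"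
  proof (cases "w \<bullet> w = 0")
    case True thus ?thesis
    proof -
      have "0 \<le> K * (u \<bullet> (M *v u))"
      proof (cases "u = 0")
        case False
        hence "u \<bullet> u > 0" by simp
        moreover have "0 \<le> K * (u \<bullet> u)" using K[of u] psd[of u] by linarith
        ultimately have "K \<ge> 0" by (metis not_le mult_neg_pos)
        thus ?thesis using psd[of u] by simp
      qed simp
      thus ?thesis using True by simp
    qed
  next
    case False hence "w \<bullet> w > 0" by (simp add: order_less_le)
    thus ?thesis using * by (simp add: mult_le_cancel_right)
  qed
  thus ?thesis by (simp add: w_def power2_norm_eq_inner)
qed

lemma quad3:
  fixes H :: "real^'n^'n"
  assumes sH: "transpose H = H"
  shows "(e - t *\<^sub>R p - u *\<^sub>R q) \<bullet> (H *v (e - t *\<^sub>R p - u *\<^sub>R q))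
    = e \<bullet> (H *v e) - 2*t*(e \<bullet> (H *v p)) - 2*u*(e \<bullet> (H *v q)) + t^2 * (p \<bullet> (H *v p))
      + 2*t*u*(p \<bullet> (H *v q)) + u^2*(q \<bullet> (H *v q))"
proof -
  have s1: "p \<bullet> (H *v e) = e \<bullet> (H *v p)" using sym_inner[OF sH, of p e] by (simp add: inner_commute)
  have s2: "q \<bullet> (H *v e) = e \<bullet> (H *v q)" using sym_inner[OF sH, of q e] by (simp add: inner_commute)
  have s3: "q \<bullet> (H *v p) = p \<bullet> (H *v q)" using sym_inner[OF sH, of q p] by (simp add: inner_commute)
  show ?thesis
    by (simp add: algebra_simps inner_diff_left inner_diff_right s1 s2 s3 power2_eq_square)
qed

lemma cg_main:
  fixes H P :: "real^'n^'n"
  assumes sH: "transpose H = H" and sP: "transpose P = P"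
   and pdH: "\<And>x. x \<noteq> 0 \<Longrightarrow> 0 < x \<bullet> (H *v x)" and pdP: "\<And>x. x \<noteq> 0 \<Longrightarrow> 0 < x \<bullet> (P *v x)"
   and xs: "H *v xs = g" and c0: "0 \<le> c"
   and contr: "\<And>e. (e - P *v (H *v e)) \<bullet> (H *v (e - P *v (H *v e))) \<le> c * (e \<bullet> (H *v e))"
  shows "\<exists>q \<beta>. case pcg_state H P g k of (x, r, p) \<Rightarrow>
     r = g - H *v x \<and> p = P *v r + \<beta> *\<^sub>R q \<and> r \<bullet> q = 0 \<and> p \<bullet> (H *v q) = 0 \<and>
     (xs - x) \<bullet> (H *v (xs - x)) \<le> c^k * (xs \<bullet> (H *v xs))"
proof (induction k)
  case 0
  show ?case by (rule exI[of _ 0], rule exI[of _ 0]) simp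
next
  case (Suc k)
  obtain x r p where st: "pcg_state H P g k = (x, r, p)" by (metis prod_cases3)
  obtain q \<beta> where r: "r = g - H *v x" and p: "p = P *v r + \<beta> *\<^sub>R q" and rq: "r \<bullet> q = 0"
    and pq: "p \<bullet> (H *v q) = 0" and IH: "(xs - x) \<bullet> (H *v (xs - x)) \<le> c^k * (xs \<bullet> (H *v xs))"
    using Suc st by auto
  have psdH: "0 \<le> y \<bullet> (H *v y)" for y using pdH[of y] by (cases "y = 0") auto
  define z where "z = P *v r"
  define a where "a = (r \<bullet> z) / (p \<bullet> (H *v p))"
  define x' where "x' = x + a *\<^sub>R p"
  define r' where "r' = r - a *\<^sub>R (H *v p)"
  define z' where "z' = P *v r'"
  define b' where "b' = (r' \<bullet> z') / (r \<bullet> z)"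
  define p' where "p' = z' + b' *\<^sub>R p"
  have st': "pcg_state H P g (Suc k) = (x', r', p')"
    by (simp add: st Let_def z_def a_def x'_def r'_def z'_def b'_def p'_def)
  have rp: "r \<bullet> p = r \<bullet> z" using p rq z_def by (simp add: inner_add_right)
  define e where "e = xs - x"
  have He: "H *v e = r" using xs r e_def by (simp add: matrix_vector_mult_diff_distrib)
  have eHq: "e \<bullet> (H *v q) = 0" using He rq sym_inner[OF sH, of e q] by simp
  have eHp: "e \<bullet> (H *v p) = r \<bullet> z" using He rp sym_inner[OF sH, of e p] by simp
  have new1: "r' = g - H *v x'"
    using r by (simp add: r'_def x'_def algebra_simps)
  have new3: "r' \<bullet> p = 0"
  proof (cases "p = 0")
    case True thus ?thesis by simp
  next
    case False
    hence "p \<bullet> (H *v p) > 0" using pdH by blast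
    have "r' \<bullet> p = r \<bullet> p - a * (p \<bullet> (H *v p))"
      by (simp add: r'_def inner_diff_left inner_commute[of "H *v p" p])
    thus ?thesis using rp \<open>p \<bullet> (H *v p) > 0\<close> by (simp add: a_def)
  qed
  have new4: "p' \<bullet> (H *v p) = 0"
  proof (cases "p = 0 \<or> r = 0")
    case True
    thus ?thesis
    proof
      assume "p = 0" thus ?thesis by simp
    next
      assume r0: "r = 0"
      hence "z = 0" by (simp add: z_def)
      hence "r' = 0" using r0 by (simp add: r'_def a_def)
      hence "p' = 0" using r0 by (simp add: p'_def z'_def b'_def)
      thus ?thesis by simp
    qed
  next
    case False
    hence pHp: "p \<bullet> (H *v p) > 0" and rz: "r \<bullet> z > 0" using pdH pdP z_def by auto
    hence a0: "a \<noteq> 0" by (simp add: a_def)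
    have aHp: "a *\<^sub>R (H *v p) = r - r'" by (simp add: r'_def)
    have r'q: "r' \<bullet> q = 0"
      using rq pq sym_inner[OF sH, of p q] by (simp add: r'_def inner_diff_left)
    have r'z: "r' \<bullet> z = 0"
    proof -
      have "z = p - \<beta> *\<^sub>R q" using p z_def by simp
      thus ?thesis using new3 r'q by (simp add: inner_diff_right)
    qed
    have z'r: "z' \<bullet> r = r' \<bullet> z"
      using sym_inner[OF sP, of r r'] by (simp add: z'_def z_def inner_commute)
    have "a * (z' \<bullet> (H *v p)) = z' \<bullet> (r - r')" using aHp by (metis inner_scaleR_right)
    also have "\<dots> = - (r' \<bullet> z')" using z'r r'z by (simp add: inner_diff_right inner_commute)
    finally have A: "z' \<bullet> (H *v p) = - (r' \<bullet> z') / a" using a0 by (simp add: field_simps)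
    have B: "b' * (p \<bullet> (H *v p)) = (r' \<bullet> z') / a"
      using pHp rz by (simp add: b'_def a_def field_simps)
    show ?thesis using A B by (simp add: p'_def inner_add_left)
  qed
  have new5: "(xs - x') \<bullet> (H *v (xs - x')) \<le> c^(Suc k) * (xs \<bullet> (H *v xs))"
  proof -
    have e': "xs - x' = e - a *\<^sub>R p - 0 *\<^sub>R q" by (simp add: e_def x'_def)
    have E: "e - P *v (H *v e) = e - 1 *\<^sub>R p - (-\<beta>) *\<^sub>R q" using He p z_def by simp
    have "(xs - x') \<bullet> (H *v (xs - x')) \<le> (e - 1 *\<^sub>R p - (-\<beta>) *\<^sub>R q) \<bullet> (H *v (e - 1 *\<^sub>R p - (-\<beta>) *\<^sub>R q))"
    proof (cases "p = 0")
      case True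
      thus ?thesis unfolding e' quad3[OF sH] using eHq psdH[of q] by simp
    next
      case False
      hence pHp: "p \<bullet> (H *v p) > 0" using pdH by blast
      define P2 where "P2 = p \<bullet> (H *v p)"
      define EP where "EP = e \<bullet> (H *v p)"
      have aa: "a = EP / P2" by (simp add: a_def EP_def P2_def eHp)
      have "e \<bullet> (H *v e) - 2*a*EP + a^2 * P2 \<le> e \<bullet> (H *v e) - 2*EP + P2 + \<beta>^2 * (q \<bullet> (H *v q))"
      proof -
        have "0 \<le> (P2 - EP)^2 / P2" using pHp P2_def by simp
        moreover have "(P2 - EP)^2 / P2 = P2 - 2*EP + 2*a*EP - a^2*P2" 
          using pHp unfolding aa P2_def[symmetric] by (simp add: field_simps power2_eq_square)
        moreover have "0 \<le> \<beta>^2 * (q \<bullet> (H *v q))" using psdH[of q] by simp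
        ultimately show ?thesis by linarith
      qed
      thus ?thesis unfolding e' quad3[OF sH] using eHq pq by (simp add: EP_def P2_def)
    qed
    also have "\<dots> \<le> c * (e \<bullet> (H *v e))" using contr[of e] E by simp
    also have "\<dots> \<le> c * (c^k * (xs \<bullet> (H *v xs)))" using IH c0 e_def by (simp add: mult_left_mono)
    finally show ?thesis by simp
  qed
  show ?case unfolding st' using new1 new3 new4 new5
    by (intro exI[of _ p] exI[of _ b']) (simp add: p'_def z'_def)
qed

lemma lmax_ge:
  fixes S :: "real^'n^'n"
  assumes sym: "transpose S = S" and v: "v \<noteq> 0" "S *v v = \<mu> *\<^sub>R v"
  shows "\<mu> \<le> lambda_max S"
proof -
  define E where "E = {\<mu>. \<exists>v. v \<noteq> 0 \<and> S *v v = \<mu> *\<^sub>R v}"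
  define f where "f = (\<lambda>\<mu>. SOME v. v \<noteq> 0 \<and> S *v v = \<mu> *\<^sub>R v)"
  have fE: "f m \<noteq> 0 \<and> S *v f m = m *\<^sub>R f m" if "m \<in> E" for m
    using that unfolding E_def f_def by (metis (mono_tags, lifting) mem_Collect_eq someI_ex)
  have inj: "inj_on f E"
  proof (rule inj_onI)
    fix m1 m2 assume m: "m1 \<in> E" "m2 \<in> E" and eq: "f m1 = f m2"
    have a: "S *v f m1 = m1 *\<^sub>R f m1" and nz: "f m1 \<noteq> 0" using fE[OF m(1)] by blast+
    have b: "S *v f m1 = m2 *\<^sub>R f m1" using fE[OF m(2)] eq by metis
    have "(m1 - m2) *\<^sub>R f m1 = 0" using a b by (auto simp: scaleR_diff_left)
    thus "m1 = m2" using nz by simp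
  qed
  have orth: "pairwise orthogonal (f ` E)"
  unfolding pairwise_def orthogonal_def
  proof (intro ballI impI)
    fix x y assume "x \<in> f ` E" "y \<in> f ` E" "x \<noteq> y"
    then obtain m1 m2 where m: "m1 \<in> E" "m2 \<in> E" "x = f m1" "y = f m2" "f m1 \<noteq> f m2" by blast
    hence ne: "m1 \<noteq> m2" by auto
    have a: "S *v f m1 = m1 *\<^sub>R f m1" using fE[OF m(1)] by blast
    have b: "S *v f m2 = m2 *\<^sub>R f m2" using fE[OF m(2)] by blast
    have "m1 * (f m1 \<bullet> f m2) = (S *v f m1) \<bullet> f m2" unfolding a by simp
    also have "\<dots> = f m1 \<bullet> (S *v f m2)" using sym_inner[OF sym, of "f m1" "f m2"] by metis
    also have "\<dots> = m2 * (f m1 \<bullet> f m2)" unfolding b by simp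
    finally have "(m1 - m2) * (f m1 \<bullet> f m2) = 0" by (simp add: left_diff_distrib)
    thus "x \<bullet> y = 0" using ne m by simp
  qed
  have "0 \<notin> f ` E" using fE by auto
  hence "independent (f ` E)" using pairwise_orthogonal_independent orth by blast
  hence "finite (f ` E)" using independent_bound by blast
  hence fin: "finite E" using inj finite_imageD by blast
  have "\<mu> \<in> E" using v E_def by blast
  thus ?thesis unfolding lambda_max_def E_def[symmetric] using fin by simp
qed

lemma transpose_add: "transpose (A + B) = transpose A + transpose (B :: real^'n^'m)"
  by (simp add: transpose_def vec_eq_iff)

lemma transpose_zero: "transpose (0::real^'n^'m) = 0"
  by (simp add: transpose_def vec_eq_iff)

lemma transpose_diff: "transpose (A - B) = transpose A - transpose (B :: real^'n^'m)"
  by (simp add: transpose_def vec_eq_iff)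

lemma transpose_sum: "transpose (sum f S) = sum (\<lambda>i. transpose (f i :: real^'n^'m)) S"
  by (induction S rule: infinite_finite_induct) (auto simp: transpose_add transpose_zero)

lemma sum_matvec: "(sum f S) *v x = sum (\<lambda>i. f i *v (x::real^'n)) S"
  by (induction S rule: infinite_finite_induct) (auto simp: matrix_vector_mult_add_rdistrib)

lemma gram_inner: "x \<bullet> ((transpose B ** B) *v x) = (B *v x) \<bullet> (B *v (x :: real^'n))"
proof -
  have "(transpose B ** B) *v x = (B *v x) v* B"
    by (simp add: matrix_vector_mul_assoc[symmetric])
  thus ?thesis by (metis inner_commute dot_lmul_matrix)
qed

lemma coercive_gram:
  fixes B :: "real^'n^'k"
  assumes "0 \<le> c" "0 < lam"
  shows "transpose (c *\<^sub>R (transpose B ** B) + lam *\<^sub>R mat 1) = c *\<^sub>R (transpose B ** B) + lam *\<^sub>R mat 1"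
    "lam * (x \<bullet> x) \<le> x \<bullet> ((c *\<^sub>R (transpose B ** B) + lam *\<^sub>R mat 1) *v x)"
proof -
  show "transpose (c *\<^sub>R (transpose B ** B) + lam *\<^sub>R mat 1) = c *\<^sub>R (transpose B ** B) + lam *\<^sub>R mat 1"
    by (simp add: transpose_add transpose_scalar matrix_transpose_mul)
  have "x \<bullet> ((c *\<^sub>R (transpose B ** B) + lam *\<^sub>R mat 1) *v x) = c * ((B *v x) \<bullet> (B *v x)) + lam * (x \<bullet> x)"
    by (simp add: matrix_vector_mult_add_rdistrib scaleR_matrix_vector_assoc[symmetric] inner_add_right gram_inner)
  thus "lam * (x \<bullet> x) \<le> x \<bullet> ((c *\<^sub>R (transpose B ** B) + lam *\<^sub>R mat 1) *v x)"
    using assms by simp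
qed

lemma pd_invertible:
  fixes M :: "real^'n^'n"
  assumes "\<And>x. x \<noteq> 0 \<Longrightarrow> 0 < x \<bullet> (M *v x)"
  shows "invertible M"
proof -
  have "inj ((*v) M)"
  proof (rule injI)
    fix x y assume "M *v x = M *v y"
    hence "M *v (x - y) = 0" by (simp add: matrix_vector_mult_diff_distrib)
    thus "x = y" using assms[of "x - y"] by (cases "x - y = 0") auto
  qed
  thus ?thesis using matrix_left_invertible_injective invertible_left_inverse by blast
qed

lemma spec_max:
  fixes S :: "real^'n^'n"
  assumes sym: "transpose S = S" and psd: "\<And>x. 0 \<le> x \<bullet> (S *v x)"
  shows "\<exists>\<mu> v. v \<noteq> 0 \<and> S *v v = \<mu> *\<^sub>R v \<and> 0 \<le> \<mu> \<and> (\<forall>x. norm (S *v x) \<le> \<mu> * norm x)"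
proof -
  define f where "f = (\<lambda>v::real^'n. v \<bullet> (S *v v))"
  have "compact (sphere (0::real^'n) 1)" by simp
  moreover have "sphere (0::real^'n) 1 \<noteq> {}" by simp
  moreover have "continuous_on (sphere (0::real^'n) 1) f" unfolding f_def
    by (intro continuous_intros)
  ultimately have "\<exists>x\<in>sphere 0 1. \<forall>y\<in>sphere 0 1. f y \<le> f x"
    by (rule continuous_attains_sup)
  then obtain v0 where v0: "v0 \<in> sphere 0 1" and mx: "\<And>y. y \<in> sphere 0 1 \<Longrightarrow> f y \<le> f v0"
    by blast
  define \<mu> where "\<mu> = f v0"
  have nv0: "norm v0 = 1" using v0 by simp
  have mu0: "0 \<le> \<mu>" using psd by (simp add: \<mu>_def f_def)
  have K: "y \<bullet> (S *v y) \<le> \<mu> * (y \<bullet> y)" for y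
  proof (cases "y = 0")
    case False
    define y' where "y' = (1 / norm y) *\<^sub>R y"
    have "y' \<in> sphere 0 1" using False by (simp add: y'_def)
    hence "f y' \<le> \<mu>" using mx \<mu>_def by blast
    moreover have "f y' = (y \<bullet> (S *v y)) / (norm y)^2"
      by (simp add: f_def y'_def matrix_vector_mult_scaleR power2_eq_square)
    ultimately have "(y \<bullet> (S *v y)) / (norm y)^2 \<le> \<mu>" by simp
    hence "y \<bullet> (S *v y) \<le> \<mu> * (norm y)^2" using False by (simp add: field_simps)
    thus ?thesis by (simp add: power2_norm_eq_inner)
  qed simp
  define N where "N = \<mu> *\<^sub>R mat 1 - S"
  have Nx: "N *v x = \<mu> *\<^sub>R x - S *v x" for x
    by (simp add: N_def matrix_vector_mult_diff_rdistrib scaleR_matrix_vector_assoc[symmetric])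
  have symN: "transpose N = N" using sym by (simp add: N_def transpose_scalar transpose_diff)
  have psdN: "0 \<le> x \<bullet> (N *v x)" for x using K[of x] by (simp add: Nx inner_diff_right)
  have N0: "v0 \<bullet> (N *v v0) = 0"
    using nv0 by (simp add: Nx inner_diff_right \<mu>_def f_def power2_norm_eq_inner[symmetric])
  have "(v0 \<bullet> (N *v (N *v v0)))^2 \<le> 0"
    using psd_CS[OF symN psdN, of v0 "N *v v0"] N0 by simp
  hence "v0 \<bullet> (N *v (N *v v0)) = 0" by simp
  hence "(N *v v0) \<bullet> (N *v v0) = 0" using sym_inner[OF symN, of v0 "N *v v0"] by simp
  hence "N *v v0 = 0" by simp
  hence eig: "S *v v0 = \<mu> *\<^sub>R v0" by (simp add: Nx)
  have bnd: "norm (S *v x) \<le> \<mu> * norm x" for x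
  proof -
    have "(norm (S *v x))^2 \<le> \<mu> * (x \<bullet> (S *v x))" by (rule psd_bound[OF sym psd K])
    also have "\<dots> \<le> \<mu> * (\<mu> * (x \<bullet> x))" using K[of x] mu0 by (simp add: mult_left_mono)
    also have "\<dots> = (\<mu> * norm x)^2" by (simp add: power2_eq_square power2_norm_eq_inner[symmetric])
    finally have "(norm (S *v x))^2 \<le> (\<mu> * norm x)^2" .
    thus ?thesis by (rule power2_le_imp_le) (simp add: mu0)
  qed
  have "v0 \<noteq> 0" using nv0 by auto
  thus ?thesis using eig mu0 bnd by blast
qed

lemma outer_apply: "outer x *v v = (x \<bullet> v) *\<^sub>R x"
proof -
  have "(\<Sum>j\<in>UNIV. (x$i * x$j) * v$j) = (\<Sum>j\<in>UNIV. x$j * v$j) * x$i" for i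
    by (subst sum_distrib_right) (simp add: mult_ac)
  thus ?thesis by (simp add: outer_def matrix_vector_mult_def vec_eq_iff inner_vec_def)
qed

lemma outer_sym: "transpose (outer x) = outer x"
  by (simp add: outer_def transpose_def vec_eq_iff mult.commute)

lemma Sigma_props:
  fixes Y :: "'a \<Rightarrow> real^'n"
  assumes int: "integrable M (\<lambda>\<omega>. outer (Y \<omega>))" and S: "integral\<^sup>L M (\<lambda>\<omega>. outer (Y \<omega>)) = \<Sigma>"
  shows "transpose \<Sigma> = \<Sigma>" "0 \<le> v \<bullet> (\<Sigma> *v v)"
proof -
  have "linear (transpose :: real^'n^'n \<Rightarrow> real^'n^'n)"
    by (simp add: linear_iff transpose_add transpose_scalar)
  hence bl: "bounded_linear (transpose :: real^'n^'n \<Rightarrow> real^'n^'n)"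
    using linear_conv_bounded_linear by blast
  have "transpose \<Sigma> = integral\<^sup>L M (\<lambda>\<omega>. transpose (outer (Y \<omega>)))"
    using integral_bounded_linear[OF bl int] S by simp
  thus "transpose \<Sigma> = \<Sigma>" using S by (simp add: outer_sym)
  have "linear (\<lambda>A::real^'n^'n. v \<bullet> (A *v v))"
    by (simp add: linear_iff matrix_vector_mult_add_rdistrib inner_add_right scaleR_matrix_vector_assoc[symmetric])
  hence bl2: "bounded_linear (\<lambda>A::real^'n^'n. v \<bullet> (A *v v))"
    using linear_conv_bounded_linear by blast
  have "v \<bullet> (\<Sigma> *v v) = integral\<^sup>L M (\<lambda>\<omega>. v \<bullet> (outer (Y \<omega>) *v v))"
    using integral_bounded_linear[OF bl2 int] S by simp
  also have "\<dots> = integral\<^sup>L M (\<lambda>\<omega>. (Y \<omega> \<bullet> v)^2)"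
    by (simp add: outer_apply power2_eq_square inner_commute)
  also have "0 \<le> \<dots>" by (rule Bochner_Integration.integral_nonneg) simp
  finally show "0 \<le> v \<bullet> (\<Sigma> *v v)" .
qed

lemma rho_bound:
  fixes \<alpha> :: real
  assumes "0 \<le> \<alpha>" "\<alpha> \<le> 1/2"
  shows "\<alpha>^2 \<le> (1 - sqrt (1 - \<alpha> / (1 - \<alpha>))) / (1 + sqrt (1 - \<alpha> / (1 - \<alpha>)))"
    "0 \<le> (1 - sqrt (1 - \<alpha> / (1 - \<alpha>))) / (1 + sqrt (1 - \<alpha> / (1 - \<alpha>)))"
proof -
  define x where "x = \<alpha> / (1 - \<alpha>)"
  have x0: "0 \<le> x" using assms by (simp add: x_def)
  have x1: "x \<le> 1" using assms by (simp add: x_def field_simps)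
  define y where "y = sqrt (1 - x)"
  have y0: "0 \<le> y" and y1: "y \<le> 1" using x0 x1 by (simp_all add: y_def)
  have yy: "y^2 = 1 - x" using x1 by (simp add: y_def)
  show "0 \<le> (1 - sqrt (1 - \<alpha> / (1 - \<alpha>))) / (1 + sqrt (1 - \<alpha> / (1 - \<alpha>)))"
    using y0 y1 unfolding x_def[symmetric] y_def[symmetric] by simp
  have "(1 - y) * (1 + y)^2 \<le> (1 - y) * 4"
  proof (rule mult_left_mono)
    have "(1 + y)^2 \<le> 2^2" using y0 y1 by (intro power_mono) auto
    thus "(1 + y)^2 \<le> 4" by simp
  qed (use y1 in simp)
  hence "(1 - y^2) / 4 \<le> (1 - y) / (1 + y)" using y0
    by (simp add: field_simps power2_eq_square)
  hence r: "x / 4 \<le> (1 - y) / (1 + y)" using yy by simp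
  have "4 * \<alpha> * (1 - \<alpha>) \<le> 1"
  proof -
    have "0 \<le> (2*\<alpha> - 1)^2" by simp
    thus ?thesis by (simp add: power2_eq_square algebra_simps)
  qed
  hence "\<alpha> * (4 * \<alpha> * (1 - \<alpha>)) \<le> \<alpha>" using assms(1) by (simp add: mult_left_le)
  hence "\<alpha>^2 \<le> x / 4" using assms unfolding x_def by (simp add: field_simps power2_eq_square)
  thus "\<alpha>^2 \<le> (1 - sqrt (1 - \<alpha> / (1 - \<alpha>))) / (1 + sqrt (1 - \<alpha> / (1 - \<alpha>)))"
    using r unfolding x_def[symmetric] y_def[symmetric] by linarith
qed

lemma contraction:
  fixes H P :: "real^'n^'n"
  assumes sH: "transpose H = H" and psd: "\<And>x. 0 \<le> x \<bullet> (H *v x)" and inv: "invertible H"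
    and L: "\<And>x. norm (H *v x) \<le> L * norm x"
    and D: "\<And>y. norm (P *v y - matrix_inv H *v y) \<le> \<delta> * norm y"
    and L0: "0 \<le> L" and d0: "0 \<le> \<delta>"
  shows "(e - P *v (H *v e)) \<bullet> (H *v (e - P *v (H *v e))) \<le> (L * \<delta>)^2 * (e \<bullet> (H *v e))"
proof -
  define w where "w = H *v e"
  define d where "d = P *v w - matrix_inv H *v w"
  have "matrix_inv H *v w = e" using inv_apply[OF inv] w_def by simp
  hence ed: "e - P *v (H *v e) = - d" by (simp add: d_def w_def)
  have K: "y \<bullet> (H *v y) \<le> L * (y \<bullet> y)" for y
  proof -
    have "y \<bullet> (H *v y) \<le> norm y * norm (H *v y)" using Cauchy_Schwarz_ineq2[of y "H *v y"] by linarith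
    also have "\<dots> \<le> norm y * (L * norm y)" using L[of y] by (simp add: mult_left_mono)
    finally show ?thesis by (simp add: power2_norm_eq_inner[symmetric] power2_eq_square mult_ac)
  qed
  have w2: "(norm w)^2 \<le> L * (e \<bullet> (H *v e))" unfolding w_def by (rule psd_bound[OF sH psd K])
  have c1: "(- d) \<bullet> (H *v (- d)) = d \<bullet> (H *v d)" by (simp add: matrix_vector_mult_diff_distrib[of H 0, simplified])
  have c2: "d \<bullet> (H *v d) \<le> L * (norm d)^2" using K[of d] by (simp add: power2_norm_eq_inner)
  have c3: "(norm d)^2 \<le> \<delta>^2 * (norm w)^2" unfolding d_def using D[of w]
    by (metis norm_ge_zero power_mono power_mult_distrib)
  have c4: "L * (norm d)^2 \<le> L * (\<delta>^2 * (norm w)^2)" using c3 L0 by (rule mult_left_mono)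
  have c5: "\<delta>^2 * (norm w)^2 \<le> \<delta>^2 * (L * (e \<bullet> (H *v e)))" using w2 by (simp add: mult_left_mono)
  have c6: "L * (\<delta>^2 * (norm w)^2) \<le> L * (\<delta>^2 * (L * (e \<bullet> (H *v e))))" using c5 L0 by (rule mult_left_mono)
  have c: "(- d) \<bullet> (H *v (- d)) \<le> L * \<delta>^2 * (L * (e \<bullet> (H *v e)))"
    using c1 c2 c4 c6 by (simp add: mult.assoc)
  have eq: "(L * \<delta>)^2 * (e \<bullet> (H *v e)) = L * \<delta>^2 * (L * (e \<bullet> (H *v e)))"
    by (simp add: power2_eq_square mult_ac)
  show ?thesis unfolding ed using c eq by linarith
qed

lemma quad_neg: "(- v) \<bullet> (H *v (- v)) = v \<bullet> (H *v (v::real^'n))"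
  by (simp add: matrix_vector_mult_diff_distrib[of H 0, simplified])

lemma quad_swap: "(a - b) \<bullet> (H *v (a - b)) = (b - a) \<bullet> (H *v (b - (a::real^'n)))"
  using quad_neg[where H=H and v="b - a"] by simp

lemma spec_norm_bound: "norm (M *v x) \<le> spec_norm M * norm x"
  unfolding spec_norm_def by (rule onorm[OF matrix_vector_mul_bounded_linear])

lemma spec_norm_nonneg: "0 \<le> spec_norm M"
  unfolding spec_norm_def by (rule onorm_pos_le[OF matrix_vector_mul_bounded_linear])

lemma P_props:
  fixes A :: "real^'d^('m::finite \<times> 'k::finite)"
  assumes lam: "0 < lam" and md: "real CARD('m) * d_eff lam \<Sigma> < real CARD('m \<times> 'k)"
  shows "transpose (matrix_inv (Htilde lam \<Sigma> A)) = matrix_inv (Htilde lam \<Sigma> A)"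
    and "x \<noteq> 0 \<Longrightarrow> 0 < x \<bullet> (matrix_inv (Htilde lam \<Sigma> A) *v x)"
proof -
  define m where "m = real CARD('m)"
  define n where "n = real CARD('m \<times> 'k)"
  define c where "c = 1 / (1 - m * d_eff lam \<Sigma> / n)"
  have n0: "n > 0" and m0: "m > 0" by (simp_all add: n_def m_def)
  have "m * d_eff lam \<Sigma> / n < 1" using md n0 by (simp add: m_def n_def field_simps)
  hence c0: "c \<ge> 0" by (simp add: c_def)
  have cm: "0 \<le> c * (m / n)" using c0 m0 n0 by simp
  define B where "B = (\<lambda>i. matrix_inv ((c * (m / n)) *\<^sub>R (transpose (block A i) ** block A i) + lam *\<^sub>R mat 1))"
  have Bs: "transpose (B i) = B i" for i
    unfolding B_def using coercive_gram[OF cm lam] pd_inj[OF lam] inv_sym by metis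
  have Bp: "y \<noteq> 0 \<Longrightarrow> 0 < y \<bullet> (B i *v y)" for i y
    unfolding B_def using coercive_gram[OF cm lam] inv_pd(1)[OF lam] by metis
  define T where "T = (1 / m) *\<^sub>R (\<Sum>i\<in>UNIV. B i)"
  have Hd: "Htilde lam \<Sigma> A = matrix_inv T"
    by (simp add: Htilde_def Let_def T_def B_def c_def m_def n_def scaleR_scaleR)
  have Ts: "transpose T = T" by (simp add: T_def transpose_scalar transpose_sum Bs)
  have Tp: "0 < y \<bullet> (T *v y)" if "y \<noteq> 0" for y
  proof -
    have "y \<bullet> (T *v y) = (1 / m) * (\<Sum>i\<in>UNIV. y \<bullet> (B i *v y))"
      by (simp add: T_def scaleR_matrix_vector_assoc[symmetric] sum_matvec inner_sum_right)
    moreover have "0 < (\<Sum>i\<in>UNIV. y \<bullet> (B i *v y))"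
      by (rule sum_pos) (use Bp that in auto)
    ultimately show ?thesis using m0 by simp
  qed
  have Ti: "invertible T" using pd_invertible Tp by blast
  have PT: "matrix_inv (Htilde lam \<Sigma> A) = T" using Hd inv_invertible(2)[OF Ti] by simp
  show "transpose (matrix_inv (Htilde lam \<Sigma> A)) = matrix_inv (Htilde lam \<Sigma> A)" using PT Ts by simp
  show "x \<noteq> 0 \<Longrightarrow> 0 < x \<bullet> (matrix_inv (Htilde lam \<Sigma> A) *v x)" using PT Tp by simp
qed

theorem lemmaB1:
  fixes M :: "'a measure"
    and X :: "'a \<Rightarrow> real^'d^('m::finite \<times> 'k::finite)"
    and \<Sigma> :: "real^'d^'d"
    and lam \<sigma>min :: real
    and \<omega> :: 'a
    and g :: "real^'d"
    and s :: nat
  assumes "prob_space M"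
    and "X \<in> borel_measurable M"
    \<comment> \<open>rows i.i.d.\<close>
    and "prob_space.indep_vars M (\<lambda>_. borel) (\<lambda>r \<omega>. X \<omega> $ r) UNIV"
    and "\<And>r r'. distr M borel (\<lambda>\<omega>. X \<omega> $ r) = distr M borel (\<lambda>\<omega>. X \<omega> $ r')"
    \<comment> \<open>mean zero, covariance \<Sigma>\<close>
    and "\<And>r. integrable M (\<lambda>\<omega>. X \<omega> $ r)"
    and "\<And>r. prob_space.expectation M (\<lambda>\<omega>. X \<omega> $ r) = 0"
    and "\<And>r. integrable M (\<lambda>\<omega>. outer (X \<omega> $ r))"
    and "\<And>r. prob_space.expectation M (\<lambda>\<omega>. outer (X \<omega> $ r)) = \<Sigma>"
    \<comment> \<open>finite-n parts of Assumption 1\<close>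
    and "\<And>r e. integrable M (\<lambda>\<omega>. (e \<bullet> (X \<omega> $ r)) ^ 4)"
    and "0 < \<sigma>min"
    and "\<And>\<mu> v. v \<noteq> 0 \<Longrightarrow> \<Sigma> *v v = \<mu> *\<^sub>R v \<Longrightarrow> \<sigma>min \<le> \<mu>"
    \<comment> \<open>setting of the lemma\<close>
    and "0 < lam"
    and "real CARD('m) * d_eff lam \<Sigma> < real CARD('m \<times> 'k)"
    and "\<omega> \<in> space M"
    and "\<alpha>0 = spec_norm (\<Sigma> - (1 / real CARD('m \<times> 'k)) *\<^sub>R (transpose (X \<omega>) ** X \<omega>))"
    and "EHinv = prob_space.expectation M (\<lambda>\<omega>'. matrix_inv (Htilde lam \<Sigma> (X \<omega>')))"
    and "\<alpha>1 = spec_norm (matrix_inv (Htilde lam \<Sigma> (X \<omega>)) - EHinv)"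
    and "\<Omega>0 = EHinv - matrix_inv (\<Sigma> + lam *\<^sub>R mat 1)"
    and "\<alpha> = (lambda_max \<Sigma> + lam + \<alpha>0) * (\<alpha>0 / lam\<^sup>2 + \<alpha>1 + spec_norm \<Omega>0)"
    and "\<alpha> \<le> 1 / 2"
    and "H = Hmat lam (X \<omega>)"
    and "pstar = matrix_inv H *v g"
    and "ptil = pcg H (matrix_inv (Htilde lam \<Sigma> (X \<omega>))) g s"
  shows "(Hnorm H (ptil - pstar))\<^sup>2 / (Hnorm H pstar)\<^sup>2
         \<le> 4 * ((1 - sqrt (1 - \<alpha> / (1 - \<alpha>))) / (1 + sqrt (1 - \<alpha> / (1 - \<alpha>)))) ^ s"
proof -
  note a = assms
  have sS: "transpose \<Sigma> = \<Sigma>" and psdS: "\<And>v. 0 \<le> v \<bullet> (\<Sigma> *v v)"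
    using Sigma_props[OF a(7)[of undefined] a(8)[of undefined]] by blast+
  obtain \<mu> v where v: "v \<noteq> 0" "\<Sigma> *v v = \<mu> *\<^sub>R v" and mu0: "0 \<le> \<mu>"
    and mub: "\<And>x. norm (\<Sigma> *v x) \<le> \<mu> * norm x"
    using spec_max[OF sS psdS] by blast
  have lm: "\<mu> \<le> lambda_max \<Sigma>" by (rule lmax_ge[OF sS v])
  have lm0: "0 \<le> lambda_max \<Sigma>" using lm mu0 by linarith
  have normS: "norm (\<Sigma> *v x) \<le> lambda_max \<Sigma> * norm x" for x
    using mub[of x] lm by (meson mult_right_mono norm_ge_zero order_trans)
  have lam: "0 < lam" by (rule a(12))
  define n where "n = real CARD('m \<times> 'k)"
  define K where "K = (1 / n) *\<^sub>R (transpose (X \<omega>) ** X \<omega>)"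
  define Dm where "Dm = \<Sigma> - K"
  have a0: "\<alpha>0 = spec_norm Dm" using a(15) by (simp add: Dm_def K_def n_def)
  have a00: "0 \<le> \<alpha>0" using a0 spec_norm_nonneg by simp
  have Hd: "H = K + lam *\<^sub>R mat 1" using a(21) by (simp add: Hmat_def K_def n_def)
  have n0: "0 \<le> 1 / n" by (simp add: n_def)
  have sH: "transpose H = H" and coH: "\<And>x. lam * (x \<bullet> x) \<le> x \<bullet> (H *v x)"
    unfolding Hd K_def using coercive_gram[OF n0 lam] by auto
  have invH: "invertible H" using pd_inj[OF lam coH] .
  have pdH: "x \<noteq> 0 \<Longrightarrow> 0 < x \<bullet> (H *v x)" for x
    using coH[of x] lam by (smt (verit) inner_gt_zero_iff mult_pos_pos)
  have psdH: "0 \<le> x \<bullet> (H *v x)" for x using pdH[of x] by (cases "x = 0") auto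
  define G where "G = \<Sigma> + lam *\<^sub>R mat 1"
  have sG: "transpose G = G" using sS by (simp add: G_def transpose_add transpose_scalar)
  have Gx: "G *v x = \<Sigma> *v x + lam *\<^sub>R x" for x
    by (simp add: G_def matrix_vector_mult_add_rdistrib scaleR_matrix_vector_assoc[symmetric])
  have coG: "lam * (x \<bullet> x) \<le> x \<bullet> (G *v x)" for x
    using psdS[of x] by (simp add: Gx inner_add_right)
  have invG: "invertible G" using pd_inj[OF lam coG] .
  define R where "R = matrix_inv G"
  define Hi where "Hi = matrix_inv H"
  have Hib: "norm (Hi *v y) \<le> norm y / lam" for y unfolding Hi_def by (rule inv_pd(2)[OF lam coH sH])
  have Rb: "norm (R *v y) \<le> norm y / lam" for y unfolding R_def by (rule inv_pd(2)[OF lam coG sG])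
  have HGD: "H *v x = G *v x - Dm *v x" for x
  proof -
    have "H = G - Dm" by (simp add: Hd G_def Dm_def)
    thus ?thesis by (simp add: matrix_vector_mult_diff_rdistrib)
  qed
  define L where "L = lambda_max \<Sigma> + lam + \<alpha>0"
  have L0: "0 \<le> L" using lm0 lam a00 by (simp add: L_def)
  have HL: "norm (H *v x) \<le> L * norm x" for x
  proof -
    have t1: "norm (\<Sigma> *v x + lam *\<^sub>R x - Dm *v x) \<le> norm (\<Sigma> *v x + lam *\<^sub>R x) + norm (Dm *v x)"
      by (rule norm_triangle_ineq4)
    have t2: "norm (\<Sigma> *v x + lam *\<^sub>R x) \<le> norm (\<Sigma> *v x) + norm (lam *\<^sub>R x)"
      by (rule norm_triangle_ineq)
    have "norm (H *v x) \<le> norm (\<Sigma> *v x) + norm (lam *\<^sub>R x) + norm (Dm *v x)"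
      unfolding HGD Gx using t1 t2 by linarith
    also have "\<dots> \<le> lambda_max \<Sigma> * norm x + lam * norm x + \<alpha>0 * norm x"
      using normS[of x] spec_norm_bound[of Dm x] a0 lam by simp
    finally show ?thesis by (simp add: L_def algebra_simps)
  qed
  define P where "P = matrix_inv (Htilde lam \<Sigma> (X \<omega>))"
  have sP: "transpose P = P" and pdP: "\<And>x. x \<noteq> 0 \<Longrightarrow> 0 < x \<bullet> (P *v x)"
    unfolding P_def using P_props[OF lam a(13)] by auto
  define \<delta> where "\<delta> = \<alpha>0 / lam\<^sup>2 + \<alpha>1 + spec_norm \<Omega>0"
  have d0: "0 \<le> \<delta>" using a00 spec_norm_nonneg[of \<Omega>0] spec_norm_nonneg[of "P - EHinv"] a(17)
    by (simp add: \<delta>_def P_def)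
  have al: "\<alpha> = L * \<delta>" using a(19) by (simp add: L_def \<delta>_def)
  have Db: "norm (P *v y - Hi *v y) \<le> \<delta> * norm y" for y
  proof -
    define u where "u = Hi *v y"
    have yu: "y = H *v u" using inv_apply(1)[OF invH] by (simp add: u_def Hi_def)
    have "R *v y = R *v (G *v u) - R *v (Dm *v u)" by (simp add: yu HGD matrix_vector_mult_diff_distrib)
    also have "R *v (G *v u) = u" using inv_apply(2)[OF invG] by (simp add: R_def)
    finally have Ry: "R *v y - Hi *v y = - (R *v (Dm *v u))" by (simp add: u_def)
    have t3: "norm (R *v y - Hi *v y) \<le> \<alpha>0 / lam^2 * norm y"
    proof -
      have "norm (R *v y - Hi *v y) \<le> norm (Dm *v u) / lam" using Rb[of "Dm *v u"] Ry by simp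
      also have "\<dots> \<le> \<alpha>0 * norm u / lam" using spec_norm_bound[of Dm u] a0 lam by (simp add: divide_right_mono)
      also have "\<dots> \<le> \<alpha>0 * (norm y / lam) / lam"
      proof -
        have "\<alpha>0 * norm u \<le> \<alpha>0 * (norm y / lam)" unfolding u_def by (rule mult_left_mono[OF Hib a00])
        thus ?thesis by (rule divide_right_mono) (use lam in linarith)
      qed
      finally show ?thesis by (simp add: power2_eq_square)
    qed
    have t1: "norm (P *v y - EHinv *v y) \<le> \<alpha>1 * norm y"
      using spec_norm_bound[of "P - EHinv" y] a(17) by (simp add: P_def matrix_vector_mult_diff_rdistrib)
    have t2: "norm (EHinv *v y - R *v y) \<le> spec_norm \<Omega>0 * norm y"
      using spec_norm_bound[of \<Omega>0 y] a(18) by (simp add: R_def G_def matrix_vector_mult_diff_rdistrib)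
    have sp: "P *v y - Hi *v y = ((P *v y - EHinv *v y) + (EHinv *v y - R *v y)) + (R *v y - Hi *v y)" by simp
    have u1: "norm (((P *v y - EHinv *v y) + (EHinv *v y - R *v y)) + (R *v y - Hi *v y))
       \<le> norm ((P *v y - EHinv *v y) + (EHinv *v y - R *v y)) + norm (R *v y - Hi *v y)"
      by (rule norm_triangle_ineq)
    have u2: "norm ((P *v y - EHinv *v y) + (EHinv *v y - R *v y)) \<le> norm (P *v y - EHinv *v y) + norm (EHinv *v y - R *v y)"
      by (rule norm_triangle_ineq)
    have "norm (P *v y - Hi *v y) \<le> norm (P *v y - EHinv *v y) + norm (EHinv *v y - R *v y) + norm (R *v y - Hi *v y)"
      unfolding sp using u1 u2 by linarith
    also have "\<dots> \<le> \<alpha>1 * norm y + spec_norm \<Omega>0 * norm y + \<alpha>0 / lam^2 * norm y" using t1 t2 t3 by linarith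
    finally show ?thesis by (simp add: \<delta>_def algebra_simps)
  qed
  have contr: "(e - P *v (H *v e)) \<bullet> (H *v (e - P *v (H *v e))) \<le> \<alpha>^2 * (e \<bullet> (H *v e))" for e
    unfolding al by (rule contraction[OF sH psdH invH HL Db[unfolded Hi_def] L0 d0])
  have al0: "0 \<le> \<alpha>" using L0 d0 al by simp
  have xs: "H *v pstar = g" using a(22) inv_apply(1)[OF invH] by simp
  obtain x r p where st: "pcg_state H P g s = (x, r, p)" by (metis prod_cases3)
  have bound: "(pstar - x) \<bullet> (H *v (pstar - x)) \<le> (\<alpha>^2)^s * (pstar \<bullet> (H *v pstar))"
    using cg_main[OF sH sP pdH pdP xs zero_le_power2[of \<alpha>] contr, of s] st by auto
  have pt: "ptil = x" using a(23) st by (simp add: pcg_def P_def)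
  define \<rho> where "\<rho> = (1 - sqrt (1 - \<alpha> / (1 - \<alpha>))) / (1 + sqrt (1 - \<alpha> / (1 - \<alpha>)))"
  have r1: "\<alpha>^2 \<le> \<rho>" and r0: "0 \<le> \<rho>" using rho_bound[OF al0 a(20)] by (simp_all add: \<rho>_def)
  have num: "(Hnorm H (ptil - pstar))\<^sup>2 = (pstar - x) \<bullet> (H *v (pstar - x))"
    unfolding Hnorm_def pt using psdH quad_swap[where H=H and a=x and b=pstar] by simp
  have den: "(Hnorm H pstar)\<^sup>2 = pstar \<bullet> (H *v pstar)"
    unfolding Hnorm_def using psdH by simp
  have pw: "(\<alpha>^2)^s \<le> 4 * \<rho>^s"
  proof -
    have "(\<alpha>^2)^s \<le> \<rho>^s" using r1 by (intro power_mono) auto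
    also have "\<dots> \<le> 4 * \<rho>^s" using r0 by simp
    finally show ?thesis .
  qed
  have "(Hnorm H (ptil - pstar))\<^sup>2 / (Hnorm H pstar)\<^sup>2 \<le> 4 * \<rho>^s"
  proof (cases "pstar \<bullet> (H *v pstar) = 0")
    case True
    thus ?thesis unfolding den using r0 by simp
  next
    case False
    hence pos: "0 < pstar \<bullet> (H *v pstar)" using psdH[of pstar] by linarith
    have "(pstar - x) \<bullet> (H *v (pstar - x)) / (pstar \<bullet> (H *v pstar)) \<le> (\<alpha>^2)^s"
      using bound pos by (simp add: divide_le_eq)
    thus ?thesis unfolding num den using pw by linarith
  qed
  thus ?thesis by (simp add: \<rho>_def)
qed


end
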